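(* Let $n\ge 2$, let $X\subset\mathbb{R}^n$ be finite with the Euclidean metric $d$, let $\epsilon>0$ and let $A\subset X$. Let $x\in X\setminus A$ and $r\in\mathbb{N}\cup\{0\}$. Then for any $p\in A\setminus(\partial A)^{\mathfrak{n}+r}_A$ there exists $a\in(\partial A)_A$ such that \[ d(p,x)>d(a,x)+r\frac{\epsilon}{2\sqrt n}. \] In particular, for any $x\in X\setminus A$ and $p\in A$, there exists $a\in(\partial A)^{\mathfrak{n}}_A$ such that $d(a,x)\le d(p,x)$.
   Context: $\mathcal{Q}=\mathcal{Q}(\epsilon)$ is the collection of closed cubes $\{x\in\mathbb{R}^n: j_i\frac{\epsilon}{2\sqrt n}\le x_i\le (j_i+1)\frac{\epsilon}{2\sqrt n},\ i=1,\dots,n\}$, $j\in\mathbb{Z}^n$. For a cube $S\in\mathcal{Q}$ and integer $m\ge0$, $S^m=\{x\in\mathbb{R}^n:\max_i|x_i-s_i|\le m\frac{\epsilon}{2\sqrt n}\text{ for some }s\in S\}$. For $B\subset\mathbb{R}^n$, $\mathcal{I}(B)=\{S\in\mathcal{Q}: S\cap B\ne\emptyset\}$, and for $Y\subset\mathbb{R}^n$, $Y_B=Y\cap B$. A cube $S\in\mathcal{I}(A)$ is an interior cube of $A$ if $S^1\cap X\subset A$ and every cube $T\in\mathcal{Q}$ with $T\subset S^1$ lies in $\mathcal{I}(A)$; otherwise $S\in\mathcal{I}(A)$ is a boundary cube of $A$. The boundary $\partial A$ is the union of all boundary cubes of $A$. For $Y\subset\mathbb{R}^n$ and integer $N\ge0$,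 the $N$-extension is $Y^N=\bigcup_{S\in\mathcal{I}(Y)}S^N$. Thus $(\partial A)^N_A=(\partial A)^N\cap A$ and $(\partial A)_A=\partial A\cap A$. $\mathfrak{n}$ is the smallest integer with $\mathfrak{n}\ge\sqrt n-1$. *)

theory Defs
  imports "HOL-Analysis.Analysis"
begin

definition gcube :: "real \<Rightarrow> int ^ 'n \<Rightarrow> (real ^ 'n::finite) set" where
  "gcube eps j = {x. \<forall>i. of_int (j $ i) * (eps / (2 * sqrt (real CARD('n)))) \<le> x $ i \<and>
                        x $ i \<le> (of_int (j $ i) + 1) * (eps / (2 * sqrt (real CARD('n))))}"

definition gcubes :: "real \<Rightarrow> (real ^ 'n::finite) set set" where
  "gcubes eps = range (gcube eps)"

definition cext :: "real \<Rightarrow> nat \<Rightarrow> (real ^ 'n::finite) set \<Rightarrow> (real ^ 'n) set" where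
  "cext eps m S = {x. \<exists>s\<in>S. \<forall>i. \<bar>x $ i - s $ i\<bar> \<le> real m * (eps / (2 * sqrt (real CARD('n))))}"

definition Icubes :: "real \<Rightarrow> (real ^ 'n::finite) set \<Rightarrow> (real ^ 'n) set set" where
  "Icubes eps B = {S \<in> gcubes eps. S \<inter> B \<noteq> {}}"

definition interior_cube ::
  "real \<Rightarrow> (real ^ 'n::finite) set \<Rightarrow> (real ^ 'n) set \<Rightarrow> (real ^ 'n) set \<Rightarrow> bool" where
  "interior_cube eps X A S \<longleftrightarrow> S \<in> Icubes eps A \<and> cext eps 1 S \<inter> X \<subseteq> A \<and>
     (\<forall>T\<in>gcubes eps. T \<subseteq> cext eps 1 S \<longrightarrow> T \<in> Icubes eps A)"

definition boundary_cube ::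
  "real \<Rightarrow> (real ^ 'n::finite) set \<Rightarrow> (real ^ 'n) set \<Rightarrow> (real ^ 'n) set \<Rightarrow> bool" where
  "boundary_cube eps X A S \<longleftrightarrow> S \<in> Icubes eps A \<and> \<not> interior_cube eps X A S"

definition cboundary :: "real \<Rightarrow> (real ^ 'n::finite) set \<Rightarrow> (real ^ 'n) set \<Rightarrow> (real ^ 'n) set" where
  "cboundary eps X A = \<Union> {S. boundary_cube eps X A S}"

definition next_set :: "real \<Rightarrow> nat \<Rightarrow> (real ^ 'n::finite) set \<Rightarrow> (real ^ 'n) set" where
  "next_set eps N Y = (\<Union>S\<in>Icubes eps Y. cext eps N S)"

text \<open>The smallest integer \<ge> sqrt n - 1 (nonnegative since n \<ge> 1).\<close>
definition frak_n :: "nat \<Rightarrow> nat" where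
  "frak_n n = nat \<lceil>sqrt (real n) - 1\<rceil>"

end

theory Submission
  imports Defs
begin

lemma delta_pos:
  assumes "eps > 0" shows "eps / (2 * sqrt (real CARD('n::finite))) > 0"
  using assms by simp

lemma cube_step:
  fixes q s :: "real ^ 'n::finite"
  assumes dp: "eps > 0" and q: "q \<in> gcube eps j"
    and sq: "\<forall>i. \<bar>s $ i - q $ i\<bar> \<le> eps / (2 * sqrt (real CARD('n)))"
  shows "\<exists>j'. s \<in> gcube eps j' \<and> (\<forall>i. \<bar>j' $ i - j $ i\<bar> \<le> 1)"
proof -
  define d where "d = eps / (2 * sqrt (real CARD('n)))"
  have d: "d > 0" using dp by (simp add: d_def)
  define j' where "j' = (\<chi> i. if s $ i < of_int (j $ i) * d then j $ i - 1
       else if s $ i > (of_int (j $ i) + 1) * d then j $ i + 1 else j $ i)"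
  have "s \<in> gcube eps j'"
    unfolding gcube_def d_def[symmetric]
  proof (intro CollectI allI)
    fix i
    have qi: "of_int (j $ i) * d \<le> q $ i" "q $ i \<le> (of_int (j $ i) + 1) * d"
      using q unfolding gcube_def d_def[symmetric] by auto
    have si: "\<bar>s $ i - q $ i\<bar> \<le> d" using sq d_def by auto
    show "of_int (j' $ i) * d \<le> s $ i \<and> s $ i \<le> (of_int (j' $ i) + 1) * d"
      using qi si by (auto simp: j'_def algebra_simps)
  qed
  moreover have "\<forall>i. \<bar>j' $ i - j $ i\<bar> \<le> 1" by (auto simp: j'_def)
  ultimately show ?thesis by blast
qed

lemma cube_near:
  fixes j j' :: "int ^ 'n::finite"
  assumes dp: "eps > 0" and jj: "\<forall>i. \<bar>j' $ i - j $ i\<bar> \<le> 1"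
  shows "gcube eps j' \<subseteq> cext eps 1 (gcube eps j)" and "gcube eps j' \<inter> gcube eps j \<noteq> {}"
proof -
  define d where "d = eps / (2 * sqrt (real CARD('n)))"
  have d: "d > 0" using dp by (simp add: d_def)
  have ji: "of_int (j' $ i) \<le> of_int (j $ i) + (1::real)" "of_int (j $ i) \<le> of_int (j' $ i) + (1::real)" for i
    using jj[rule_format, of i] by linarith+
  show "gcube eps j' \<subseteq> cext eps 1 (gcube eps j)"
  proof
    fix y assume y: "y \<in> gcube eps j'"
    define s where "s = (\<chi> i. max (of_int (j $ i) * d) (min (y $ i) ((of_int (j $ i) + 1) * d)))"
    have yi: "of_int (j' $ i) * d \<le> y $ i" "y $ i \<le> (of_int (j' $ i) + 1) * d" for i
      using y unfolding gcube_def d_def[symmetric] by auto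
    have "s \<in> gcube eps j" unfolding gcube_def d_def[symmetric]
      using d by (auto simp: s_def algebra_simps)
    moreover have "\<bar>y $ i - s $ i\<bar> \<le> 1 * d" for i
    proof -
      have a: "of_int (j' $ i) * d \<le> (of_int (j $ i) + 1) * d"
        using ji(1)[of i] d by (intro mult_right_mono) auto
      have b: "of_int (j $ i) * d \<le> (of_int (j' $ i) + 1) * d"
        using ji(2)[of i] d by (intro mult_right_mono) auto
      show ?thesis using yi[of i] a b by (auto simp: s_def algebra_simps)
    qed
    ultimately show "y \<in> cext eps 1 (gcube eps j)"
      unfolding cext_def d_def[symmetric] by auto
  qed
  define w where "w = (\<chi> i. max (of_int (j $ i)) (of_int (j' $ i)) * d)"
  have a: "of_int (j' $ i) * d \<le> (of_int (j $ i) + 1) * d" for i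
    using ji(1)[of i] d by (intro mult_right_mono) auto
  have b: "of_int (j $ i) * d \<le> (of_int (j' $ i) + 1) * d" for i
    using ji(2)[of i] d by (intro mult_right_mono) auto
  have "w \<in> gcube eps j'" "w \<in> gcube eps j"
    unfolding gcube_def d_def[symmetric] using d a b
    by (auto simp: w_def max_def algebra_simps)
  then show "gcube eps j' \<inter> gcube eps j \<noteq> {}" by blast
qed

lemma cube_of_point:
  fixes y :: "real ^ 'n::finite"
  assumes dp: "eps > 0"
  shows "\<exists>j. y \<in> gcube eps j"
proof -
  define d where "d = eps / (2 * sqrt (real CARD('n)))"
  have d: "d > 0" using dp by (simp add: d_def)
  define j where "j = (\<chi> i. \<lfloor>y $ i / d\<rfloor>)"
  have "y \<in> gcube eps j" unfolding gcube_def d_def[symmetric]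
  proof (intro CollectI allI conjI)
    fix i
    have "of_int \<lfloor>y $ i / d\<rfloor> \<le> y $ i / d" "y $ i / d \<le> of_int \<lfloor>y $ i / d\<rfloor> + 1"
      by linarith+
    then have "of_int \<lfloor>y $ i / d\<rfloor> * d \<le> y $ i / d * d" "y $ i / d * d \<le> (of_int \<lfloor>y $ i / d\<rfloor> + 1) * d"
      using d by (intro mult_right_mono; simp)+
    then show "of_int (j $ i) * d \<le> y $ i" "y $ i \<le> (of_int (j $ i) + 1) * d"
      using d by (auto simp: j_def)
  qed
  then show ?thesis by blast
qed

lemma in_cext_self:
  assumes "eps > 0" "y \<in> S" shows "y \<in> cext eps m S"
  using assms unfolding cext_def by (auto intro!: bexI[of _ y])

lemma gcubes_ex: "S \<in> gcubes eps \<Longrightarrow> \<exists>j. S = gcube eps j"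
  unfolding gcubes_def by auto

lemma segment_boundary:
  fixes X A :: "(real ^ 'n::finite) set"
  assumes dp: "eps > 0" and x: "x \<in> X" "x \<notin> A" and p: "p \<in> A"
  shows "\<exists>t. 0 \<le> t \<and> t \<le> 1 \<and> (\<exists>B. boundary_cube eps X A B \<and> p + t *\<^sub>R (x - p) \<in> B)"
proof (rule ccontr)
  assume H: "\<not> ?thesis"
  define d where "d = eps / (2 * sqrt (real CARD('n)))"
  have d: "d > 0" using dp by (simp add: d_def)
  obtain m :: nat where m: "dist p x / d < real m" using reals_Archimedean2 by blast
  have m0: "m > 0" using m d by (cases "m = 0") (auto simp: divide_less_0_iff)
  define q where "q k = p + (real k / real m) *\<^sub>R (x - p)" for k :: nat
  have noB: "\<not> boundary_cube eps X A B" if "k \<le> m" "q k \<in> B" for k B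
    using H that m0 unfolding q_def by auto
  have step: "\<bar>q (Suc k) $ i - q k $ i\<bar> \<le> d" for k i
  proof -
    have "q (Suc k) - q k = (1 / real m) *\<^sub>R (x - p)"
      using m0 by (simp add: q_def algebra_simps add_divide_distrib scaleR_add_left)
    then have "\<bar>q (Suc k) $ i - q k $ i\<bar> \<le> norm ((1 / real m) *\<^sub>R (x - p))"
      by (metis component_le_norm_cart vector_minus_component)
    also have "\<dots> = dist p x / real m" by (simp add: dist_norm norm_minus_commute)
    also have "\<dots> \<le> d" using m m0 d by (simp add: field_simps)
    finally show ?thesis .
  qed
  have interior_of_icube: "interior_cube eps X A S" if "S \<in> Icubes eps A" "q k \<in> S" "k \<le> m" for S k
    using noB[OF that(3,2)] that(1) unfolding boundary_cube_def by blast
  have "\<exists>S. interior_cube eps X A S \<and> q k \<in> S" if "k \<le> m" for k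
    using that
  proof (induction k)
    case 0
    obtain j where j: "p \<in> gcube eps j" using cube_of_point dp by blast
    have "gcube eps j \<in> Icubes eps A" using j p unfolding Icubes_def gcubes_def by auto
    moreover have "q 0 = p" by (simp add: q_def)
    ultimately show ?case using interior_of_icube[of "gcube eps j" 0] j by auto
  next
    case (Suc k)
    then obtain S where S: "interior_cube eps X A S" "q k \<in> S" by auto
    then have "S \<in> gcubes eps" unfolding interior_cube_def Icubes_def by auto
    then obtain j where j: "S = gcube eps j" using gcubes_ex by blast
    obtain j' where j': "q (Suc k) \<in> gcube eps j'" "\<forall>i. \<bar>j' $ i - j $ i\<bar> \<le> 1"
      using cube_step[OF dp, of "q k" j "q (Suc k)"] S(2) j step d_def by auto
    have "gcube eps j' \<subseteq> cext eps 1 S" using cube_near(1)[OF dp j'(2)] j by simp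
    then have "gcube eps j' \<in> Icubes eps A" using S(1) unfolding interior_cube_def gcubes_def by auto
    then show ?case using interior_of_icube[of "gcube eps j'" "Suc k"] j' Suc.prems by auto
  qed
  then obtain S where S: "interior_cube eps X A S" "q m \<in> S" by blast
  have "q m = x" using m0 by (simp add: q_def)
  then have "x \<in> cext eps 1 S \<inter> X" using S(2) in_cext_self[OF dp] x by auto
  then show False using S(1) x unfolding interior_cube_def by auto
qed

lemma far_from_boundary:
  fixes X A :: "(real ^ 'n::finite) set"
  assumes dp: "eps > 0" and pn: "p \<notin> next_set eps N (cboundary eps X A)"
    and B: "boundary_cube eps X A B" and q: "q \<in> B"
  shows "\<exists>i. \<bar>p $ i - q $ i\<bar> > (real N + 1) * (eps / (2 * sqrt (real CARD('n))))"
proof (rule ccontr)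
  assume H: "\<not> ?thesis"
  define d where "d = eps / (2 * sqrt (real CARD('n)))"
  have d: "d > 0" using dp by (simp add: d_def)
  have Hi: "\<bar>p $ i - q $ i\<bar> \<le> (real N + 1) * d" for i using H d_def by (auto simp: not_less)
  have "B \<in> gcubes eps" using B unfolding boundary_cube_def Icubes_def by auto
  then obtain j where j: "B = gcube eps j" using gcubes_ex by blast
  define s where "s = (\<chi> i. q $ i + max (- d) (min d (p $ i - q $ i)))"
  have sq: "\<forall>i. \<bar>s $ i - q $ i\<bar> \<le> eps / (2 * sqrt (real CARD('n)))"
    using d by (auto simp: s_def d_def[symmetric])
  obtain j' where j': "s \<in> gcube eps j'" "\<forall>i. \<bar>j' $ i - j $ i\<bar> \<le> 1"
    using cube_step[OF dp, of q j s] q j sq by auto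
  have "gcube eps j' \<inter> B \<noteq> {}" using cube_near(2)[OF dp j'(2)] j by simp
  moreover have "B \<subseteq> cboundary eps X A" using B unfolding cboundary_def by auto
  ultimately have "gcube eps j' \<in> Icubes eps (cboundary eps X A)"
    unfolding Icubes_def gcubes_def by auto
  moreover have "p \<in> cext eps N (gcube eps j')"
    unfolding cext_def d_def[symmetric]
  proof (intro CollectI bexI[of _ s] allI)
    fix i
    show "\<bar>p $ i - s $ i\<bar> \<le> real N * d" using Hi[of i] d mult_nonneg_nonneg[of d "real N"]
      by (auto simp: s_def algebra_simps abs_le_iff max_def min_def)
  qed (use j' in auto)
  ultimately show False using pn unfolding next_set_def by auto
qed

lemma cube_diam:
  fixes a q :: "real ^ 'n::finite"
  assumes dp: "eps > 0" and a: "a \<in> gcube eps j" and q: "q \<in> gcube eps j"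
  shows "dist a q \<le> sqrt (real CARD('n)) * (eps / (2 * sqrt (real CARD('n))))"
proof -
  define d where "d = eps / (2 * sqrt (real CARD('n)))"
  have d: "d > 0" using dp by (simp add: d_def)
  have ai: "\<bar>a $ i - q $ i\<bar> \<le> d" for i
  proof -
    have "of_int (j $ i) * d \<le> a $ i \<and> a $ i \<le> (of_int (j $ i) + 1) * d"
         "of_int (j $ i) * d \<le> q $ i \<and> q $ i \<le> (of_int (j $ i) + 1) * d"
      using a q unfolding gcube_def d_def[symmetric] by auto
    then show ?thesis by (auto simp: abs_le_iff algebra_simps)
  qed
  have "dist a q = sqrt (\<Sum>i\<in>UNIV. (norm ((a - q) $ i))\<^sup>2)"
    by (simp add: dist_norm norm_vec_def L2_set_def)
  also have "\<dots> \<le> sqrt (\<Sum>i\<in>(UNIV::'n set). d\<^sup>2)"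
  proof (intro real_sqrt_le_mono sum_mono)
    fix i
    show "(norm ((a - q) $ i))\<^sup>2 \<le> d\<^sup>2" using ai[of i] d
      by (simp add: abs_le_square_iff[symmetric])
  qed
  also have "\<dots> = sqrt (real CARD('n)) * d" using d by (simp add: real_sqrt_mult)
  finally show ?thesis by (simp add: d_def)
qed

lemma frak_n_ge: "real (frak_n n) \<ge> sqrt (real n) - 1"
  unfolding frak_n_def by linarith

theorem proposition4p2:
  fixes X A :: "(real ^ 'n::finite) set" and eps :: real
  assumes "CARD('n) \<ge> 2"
    and "finite X"
    and "eps > 0"
    and "A \<subseteq> X"
  shows "(\<forall>x \<in> X - A. \<forall>r::nat.
            \<forall>p \<in> A - (next_set eps (frak_n CARD('n) + r) (cboundary eps X A) \<inter> A).
              \<exists>a \<in> cboundary eps X A \<inter> A.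
                dist p x > dist a x + real r * (eps / (2 * sqrt (real CARD('n)))))
       \<and> (\<forall>x \<in> X - A. \<forall>p \<in> A.
            \<exists>a \<in> next_set eps (frak_n CARD('n)) (cboundary eps X A) \<inter> A.
              dist a x \<le> dist p x)"
proof -
  define d where "d = eps / (2 * sqrt (real CARD('n)))"
  have d: "d > 0" using assms(3) by (simp add: d_def)
  have P1: "\<exists>a \<in> cboundary eps X A \<inter> A. \<exists>B. boundary_cube eps X A B \<and> a \<in> B \<and>
                dist p x > dist a x + real r * d"
    if x: "x \<in> X - A" and p: "p \<in> A" "p \<notin> next_set eps (frak_n CARD('n) + r) (cboundary eps X A)"
    for x p r
  proof -
    obtain t B where t: "0 \<le> t" "t \<le> 1" and B: "boundary_cube eps X A B"
      and qB: "p + t *\<^sub>R (x - p) \<in> B"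
      using segment_boundary[OF assms(3), of x X A p] x p by auto
    define q where "q = p + t *\<^sub>R (x - p)"
    have "B \<in> Icubes eps A" using B unfolding boundary_cube_def by auto
    then obtain a where a: "a \<in> B" "a \<in> A" and "B \<in> gcubes eps" unfolding Icubes_def by auto
    then obtain j where j: "B = gcube eps j" using gcubes_ex by blast
    have aB: "a \<in> cboundary eps X A" using B a unfolding cboundary_def by auto
    have daq: "dist a q \<le> sqrt (real CARD('n)) * d"
      using cube_diam[OF assms(3), of a j q] a qB j q_def d_def by auto
    obtain i where i: "\<bar>p $ i - q $ i\<bar> > (real (frak_n CARD('n) + r) + 1) * d"
      using far_from_boundary[OF assms(3) p(2) B, of q] qB q_def d_def by auto
    have "\<bar>p $ i - q $ i\<bar> \<le> dist p q"
      by (metis component_le_norm_cart dist_norm vector_minus_component)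
    moreover have "(real (frak_n CARD('n) + r) + 1) * d \<ge> (sqrt (real CARD('n)) + real r) * d"
      using frak_n_ge[of "CARD('n)"] d by (intro mult_right_mono) auto
    ultimately have dpq: "dist p q > (sqrt (real CARD('n)) + real r) * d" using i by linarith
    have "dist p q = t * dist p x"
      using t by (simp add: q_def dist_norm norm_minus_commute)
    moreover have "q - x = (1 - t) *\<^sub>R (p - x)" by (simp add: q_def algebra_simps)
    then have "dist q x = (1 - t) * dist p x"
      using t by (simp add: dist_norm)
    ultimately have sum: "dist p x = dist p q + dist q x" by (simp add: algebra_simps)
    have "dist a x \<le> dist a q + dist q x" by (rule dist_triangle)
    then have "dist p x > dist a x + real r * d"
      using sum dpq daq by (simp add: algebra_simps)
    then show ?thesis using aB a B by blast
  qed
  show ?thesis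
  proof (intro conjI ballI allI)
    fix x r p
    assume x: "x \<in> X - A" and p: "p \<in> A - (next_set eps (frak_n CARD('n) + r) (cboundary eps X A) \<inter> A)"
    then show "\<exists>a \<in> cboundary eps X A \<inter> A.
                dist p x > dist a x + real r * (eps / (2 * sqrt (real CARD('n))))"
      using P1[of x p r] by (auto simp: d_def)
  next
    fix x p
    assume x: "x \<in> X - A" and p: "p \<in> A"
    show "\<exists>a \<in> next_set eps (frak_n CARD('n)) (cboundary eps X A) \<inter> A. dist a x \<le> dist p x"
    proof (cases "p \<in> next_set eps (frak_n CARD('n)) (cboundary eps X A)")
      case True then show ?thesis using p by auto
    next
      case False
      then obtain a B where a: "a \<in> cboundary eps X A \<inter> A" "boundary_cube eps X A B" "a \<in> B"
        "dist p x > dist a x + real 0 * d"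
        using P1[of x p 0] x p by auto
      have "B \<subseteq> cboundary eps X A" using a(2) unfolding cboundary_def by auto
      then have "B \<in> Icubes eps (cboundary eps X A)" using a(2,3)
        unfolding Icubes_def boundary_cube_def by auto
      moreover have "a \<in> cext eps (frak_n CARD('n)) B" using in_cext_self[OF assms(3) a(3)] .
      ultimately have "a \<in> next_set eps (frak_n CARD('n)) (cboundary eps X A)"
        unfolding next_set_def by auto
      then show ?thesis using a by (intro bexI[of _ a]) auto
    qed
  qed
qed

end
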